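(* Let $\mathcal{U}=\{1,\dots,N\}$ be a set of domains, data $(\mathbf{x},u)\sim p(\mathbf{x},u)$ with $p(u=i)=1/N$ for all $i$, and let $E$ be an encoder with $\mathbf{e}=E(\mathbf{x})$. Let $w_{ij}>0$ ($i\ne j$) be weights, and for each ordered pair $i\ne j$ let $D_{ij}:\mathcal{Z}\to(0,1)$ be a pairwise discriminator. Define the value $$V(E,\{D_{ij}\})=\frac12\sum_{i\neq j} w_{ij}\Big(p(u=i)\,\mathbb{E}_{\mathbf{e}\mid u=i}[\log D_{ij}(\mathbf{e})]+p(u=j)\,\mathbb{E}_{\mathbf{e}\mid u=j}[\log(1-D_{ij}(\mathbf{e}))]\Big),$$ which is the objective $\mathbb{E}[\sum_{j\ne i} w_{ij}\log D_{ij}(E(\mathbf{x}))]$ of the min-max game $\min_E\max_{\{D_{ij}\}} V$. Then for every encoder $E$, $$\max_{\{D_{ij}\}} V(E,\{D_{ij}\})\ \ge\ -\frac{\log 2}{N}\sum_{i\ne j} w_{ij},$$ and this lower bound is tight: equality (the optimum of the min-max game) is achieved when $p(\mathbf{e}\mid u=i)=p(\mathbf{e}\mid u=j)$ for all $i,j$, equivalently $p(\mathbf{e}\mid u=i)=p(\mathbf{e})$ for all $i$.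
   Context: $\mathcal{Z}$ denotes the encoding space and $p(\mathbf{e}\mid u=i)$ the distribution of encodings of data from domain $i$. The weights $w_{ij}$ are meant to reflect pairwise domain distances from a domain taxonomy (e.g. $w_{ij}\propto 1/\mathbf{A}_{ij}$ with $\mathbf{A}_{ij}$ the taxonomy distance between domains), but the result holds for arbitrary positive weights. *)

theory Defs
  imports "HOL-Probability.Probability"
begin

definition domain_pairs :: "nat \<Rightarrow> (nat \<times> nat) set" where
  "domain_pairs N = {(i, j). i \<in> {1..N} \<and> j \<in> {1..N} \<and> i \<noteq> j}"

text \<open>Expectation of a (possibly non-integrable) function with values in (-inf,0],
  taken as an extended real: E[f] = - integral of (-f), which may be -infinity.\<close>
definition neg_expect :: "'z measure \<Rightarrow> ('z \<Rightarrow> real) \<Rightarrow> ereal" where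
  "neg_expect P f = - enn2ereal (\<integral>\<^sup>+ e. ennreal (- f e) \<partial>P)"

definition admissible_discs :: "nat \<Rightarrow> 'z measure \<Rightarrow> (nat \<Rightarrow> nat \<Rightarrow> 'z \<Rightarrow> real) \<Rightarrow> bool" where
  "admissible_discs N MZ D \<longleftrightarrow>
     (\<forall>(i, j) \<in> domain_pairs N. D i j \<in> borel_measurable MZ \<and>
        (\<forall>e \<in> space MZ. 0 < D i j e \<and> D i j e < 1))"

text \<open>The value V(E,{D_ij}), where P i = p(e | u = i) is the encoding distribution
  of domain i and p(u = i) = 1/N.\<close>
definition game_value ::
  "nat \<Rightarrow> (nat \<Rightarrow> nat \<Rightarrow> real) \<Rightarrow> (nat \<Rightarrow> 'z measure) \<Rightarrow> (nat \<Rightarrow> nat \<Rightarrow> 'z \<Rightarrow> real) \<Rightarrow> ereal" where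
  "game_value N w P D =
     ereal (1/2) * (\<Sum>(i, j) \<in> domain_pairs N.
        ereal (w i j) * (ereal (1 / real N) * neg_expect (P i) (\<lambda>e. ln (D i j e))
                       + ereal (1 / real N) * neg_expect (P j) (\<lambda>e. ln (1 - D i j e))))"

text \<open>max over discriminators (as a supremum; attainment is stated separately).\<close>
definition max_value ::
  "nat \<Rightarrow> (nat \<Rightarrow> nat \<Rightarrow> real) \<Rightarrow> 'z measure \<Rightarrow> (nat \<Rightarrow> 'z measure) \<Rightarrow> ereal" where
  "max_value N w MZ P = (SUP D \<in> {D. admissible_discs N MZ D}. game_value N w P D)"

end

theory Submission
  imports Defs
begin

lemma pt_bound:
  fixes d :: real assumes "0 < d" "d < 1"
  shows "2 * ln 2 \<le> - ln d - ln (1 - d)"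
proof -
  have "0 \<le> (d - 1/2)^2" by simp
  hence q: "d * (1 - d) \<le> 1/4" by (simp add: power2_eq_square algebra_simps)
  have "ln (d * (1 - d)) \<le> ln (1/4)" using q assms by (subst ln_le_cancel_iff) auto
  moreover have "ln (d * (1 - d)) = ln d + ln (1 - d)" using assms by (simp add: ln_mult)
  moreover have "ln (1/4::real) = - 2 * ln 2"
  proof -
    have "ln (4::real) = 2 * ln 2" using ln_mult[of 2 2] by simp
    then show ?thesis by (simp add: ln_div)
  qed
  ultimately show ?thesis by linarith
qed

lemma pair_bound:
  assumes P: "prob_space P" and dm: "d \<in> borel_measurable P"
    and dr: "\<forall>e\<in>space P. 0 < d e \<and> d e < 1"
  shows "neg_expect P (\<lambda>e. ln (d e)) + neg_expect P (\<lambda>e. ln (1 - d e)) \<le> ereal (- 2 * ln 2)"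
proof -
  let ?f = "\<lambda>e. ennreal (- ln (d e))" and ?g = "\<lambda>e. ennreal (- ln (1 - d e))"
  have fm: "?f \<in> borel_measurable P" using dm by measurable
  have gm: "?g \<in> borel_measurable P" using dm by measurable
  have "(\<integral>\<^sup>+ e. ennreal (2 * ln 2) \<partial>P) \<le> (\<integral>\<^sup>+ e. ?f e + ?g e \<partial>P)"
  proof (rule nn_integral_mono)
    fix e assume "e \<in> space P"
    with dr have d: "0 < d e" "d e < 1" by auto
    have "ln (d e) < 0" "ln (1 - d e) < 0" using d by auto
    hence "?f e + ?g e = ennreal (- ln (d e) - ln (1 - d e))"
      by (simp add: ennreal_plus[symmetric])
    then show "ennreal (2 * ln 2) \<le> ?f e + ?g e"
      using pt_bound[OF d] by (simp add: ennreal_leI)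
  qed
  also have "\<dots> = integral\<^sup>N P ?f + integral\<^sup>N P ?g" by (rule nn_integral_add[OF fm gm])
  finally have le: "ennreal (2 * ln 2) \<le> integral\<^sup>N P ?f + integral\<^sup>N P ?g"
    using prob_space.emeasure_space_1[OF P] by simp
  have "enn2ereal (ennreal (2 * ln 2)) \<le> enn2ereal (integral\<^sup>N P ?f) + enn2ereal (integral\<^sup>N P ?g)"
    using le unfolding less_eq_ennreal.rep_eq plus_ennreal.rep_eq .
  hence "ereal (2 * ln 2) \<le> enn2ereal (integral\<^sup>N P ?f) + enn2ereal (integral\<^sup>N P ?g)"
    by simp
  moreover have "enn2ereal (integral\<^sup>N P ?f) \<ge> 0" "enn2ereal (integral\<^sup>N P ?g) \<ge> 0" by simp_all
  ultimately show ?thesis unfolding neg_expect_def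
    by (cases "enn2ereal (integral\<^sup>N P ?f)"; cases "enn2ereal (integral\<^sup>N P ?g)") auto
qed

lemma const_half:
  assumes P: "prob_space P"
  shows "neg_expect P (\<lambda>e. ln (1/2)) = ereal (- ln 2)"
  using prob_space.emeasure_space_1[OF P] unfolding neg_expect_def
  by (simp add: ln_div)

lemma term_bound:
  fixes a b :: ereal and c n :: real
  assumes "a + b \<le> ereal (- 2 * ln 2)" "a \<le> 0" "b \<le> 0" "0 < c" "0 \<le> n"
  shows "ereal c * (ereal n * a + ereal n * b) \<le> ereal (c * (n * (- 2 * ln 2)))"
proof -
  have "ereal n * a + ereal n * b \<le> ereal (n * (- 2 * ln 2))"
  proof (cases a; cases b)
    fix r s assume ab: "a = ereal r" "b = ereal s"
    then have "r + s \<le> - 2 * ln 2" using assms(1) by simp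
    then have "n * (r + s) \<le> n * (- 2 * ln 2)" using assms(5) by (rule mult_left_mono)
    then show ?thesis using ab by (simp add: algebra_simps)
  qed (use assms in auto)
  then have "ereal c * (ereal n * a + ereal n * b) \<le> ereal c * ereal (n * (- 2 * ln 2))"
    using assms(4) by (intro ereal_mult_left_mono) auto
  then show ?thesis by simp
qed

lemma neg_expect_le0: "neg_expect P f \<le> 0"
  unfolding neg_expect_def by simp

theorem theorem4p3:
  fixes N :: nat
    and w :: "nat \<Rightarrow> nat \<Rightarrow> real"
    and MX :: "'x measure" and MZ :: "'z measure"
    and Q :: "nat \<Rightarrow> 'x measure"
    and E :: "'x \<Rightarrow> 'z"
  assumes w_pos: "\<And>i j. (i, j) \<in> domain_pairs N \<Longrightarrow> 0 < w i j"
    and Q_prob: "\<And>i. i \<in> {1..N} \<Longrightarrow> prob_space (Q i)"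
    and Q_sets: "\<And>i. i \<in> {1..N} \<Longrightarrow> sets (Q i) = sets MX"
    and E_meas: "E \<in> measurable MX MZ"
  shows "max_value N w MZ (\<lambda>i. distr (Q i) MZ E)
           \<ge> ereal (- (ln 2 / real N) * (\<Sum>(i, j) \<in> domain_pairs N. w i j))
     \<and> ((\<forall>i \<in> {1..N}. \<forall>j \<in> {1..N}. distr (Q i) MZ E = distr (Q j) MZ E) \<longrightarrow>
           max_value N w MZ (\<lambda>i. distr (Q i) MZ E)
             = ereal (- (ln 2 / real N) * (\<Sum>(i, j) \<in> domain_pairs N. w i j))
           \<and> (\<exists>D. admissible_discs N MZ D \<and>
                  game_value N w (\<lambda>i. distr (Q i) MZ E) D
                    = ereal (- (ln 2 / real N) * (\<Sum>(i, j) \<in> domain_pairs N. w i j))))"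
proof -
  define P where "P = (\<lambda>i. distr (Q i) MZ E)"
  define B where "B = ereal (- (ln 2 / real N) * (\<Sum>(i, j) \<in> domain_pairs N. w i j))"
  have fin: "finite (domain_pairs N)"
    by (rule finite_subset[of _ "{1..N} \<times> {1..N}"]) (auto simp: domain_pairs_def)
  have Pprob: "prob_space (P i)" if "i \<in> {1..N}" for i
  proof -
    have "E \<in> measurable (Q i) MZ" using E_meas measurable_cong_sets[OF Q_sets[OF that] refl, of MZ] by simp
    then show ?thesis unfolding P_def
      using prob_space.prob_space_distr[OF Q_prob[OF that]] by blast
  qed
  have Pspace: "space (P i) = space MZ" for i unfolding P_def by simp
  have Pmeas: "borel_measurable (P i) = borel_measurable MZ" for i
    unfolding P_def by (rule measurable_cong_sets) auto
  have pairI: "i \<in> {1..N}" "j \<in> {1..N}" if "(i, j) \<in> domain_pairs N" for i j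
    using that by (auto simp: domain_pairs_def)
  have Bexp: "ereal (1/2) * (\<Sum>(i, j) \<in> domain_pairs N.
        ereal (w i j * (1 / real N * (- 2 * ln 2)))) = B" unfolding B_def
      by (simp add: sum_distrib_left[symmetric] sum_distrib_right[symmetric] case_prod_beta
           algebra_simps)
        (simp only: sum_negf sum_divide_distrib[symmetric] sum_distrib_left[symmetric])
  define D0 where "D0 = (\<lambda>(i::nat) (j::nat) (e::'z). (1/2::real))"
  have D0adm: "admissible_discs N MZ D0"
    unfolding admissible_discs_def D0_def by auto
  have D0val: "game_value N w P D0 = B"
  proof -
    have "game_value N w P D0 = ereal (1/2) * (\<Sum>(i, j) \<in> domain_pairs N.
        ereal (w i j * (1 / real N * (- 2 * ln 2))))"
      unfolding game_value_def
    proof (intro arg_cong[where f="\<lambda>x. ereal (1/2) * x"] sum.cong refl, clarify)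
      fix i j assume ij: "(i, j) \<in> domain_pairs N"
      show "ereal (w i j) * (ereal (1 / real N) * neg_expect (P i) (\<lambda>e. ln (D0 i j e))
                       + ereal (1 / real N) * neg_expect (P j) (\<lambda>e. ln (1 - D0 i j e)))
            = ereal (w i j * (1 / real N * (- 2 * ln 2)))"
        using const_half[OF Pprob[OF pairI(1)[OF ij]]] const_half[OF Pprob[OF pairI(2)[OF ij]]]
        by (simp add: D0_def algebra_simps)
    qed
    also have "\<dots> = B" by (rule Bexp)
    finally show ?thesis .
  qed
  have lower: "B \<le> max_value N w MZ P"
    unfolding max_value_def using D0adm D0val[symmetric] by (auto intro!: SUP_upper2)
  have upper: "max_value N w MZ P \<le> B"
    if eq: "\<forall>i \<in> {1..N}. \<forall>j \<in> {1..N}. P i = P j"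
    unfolding max_value_def
  proof (rule SUP_least, clarify)
    fix D assume adm: "admissible_discs N MZ D"
    have "game_value N w P D \<le> ereal (1/2) * (\<Sum>(i, j) \<in> domain_pairs N.
        ereal (w i j * (1 / real N * (- 2 * ln 2))))"
      unfolding game_value_def
    proof (rule ereal_mult_left_mono[OF sum_mono], clarify)
      fix i j assume ij: "(i, j) \<in> domain_pairs N"
      have Pij: "P j = P i" using eq pairI[OF ij] by blast
      have dm: "D i j \<in> borel_measurable (P i)" "\<forall>e\<in>space (P i). 0 < D i j e \<and> D i j e < 1"
        using adm ij unfolding admissible_discs_def Pmeas Pspace by auto
      show "ereal (w i j) * (ereal (1 / real N) * neg_expect (P i) (\<lambda>e. ln (D i j e))
                       + ereal (1 / real N) * neg_expect (P j) (\<lambda>e. ln (1 - D i j e)))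
            \<le> ereal (w i j * (1 / real N * (- 2 * ln 2)))"
        unfolding Pij
        by (rule term_bound[OF pair_bound[OF Pprob[OF pairI(1)[OF ij]] dm] neg_expect_le0
              neg_expect_le0 w_pos[OF ij]]) simp
    qed simp
    also have "\<dots> = B" by (rule Bexp)
    finally show "game_value N w P D \<le> B" .
  qed
  have main: "B \<le> max_value N w MZ P \<and> ((\<forall>i \<in> {1..N}. \<forall>j \<in> {1..N}. P i = P j) \<longrightarrow>
     max_value N w MZ P = B \<and> (\<exists>D. admissible_discs N MZ D \<and> game_value N w P D = B))"
    using lower upper D0adm D0val by (blast intro: antisym)
  show ?thesis using main unfolding P_def B_def .
qed

end
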